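(* Let $f:\{0,1\}^3\to\{0,1\}$ be $f(x_1,x_2,x_3)=x_1\wedge(x_2\vee x_3)$. Then $Q_E(f)=2$, while every parity decision tree computing $f$ has depth at least $3$.
   Context: Quantum query model: a $t$-query quantum query algorithm on inputs $x\in\{0,1\}^m$ acts on a Hilbert space $\mathcal H_{\rm in}\otimes\mathcal H_{\rm work}\otimes\mathcal H_{\rm out}$, where $\mathcal H_{\rm in}$ has orthonormal basis $|0\rangle,\dots,|m\rangle$, $\mathcal H_{\rm work}$ is a finite-dimensional workspace of arbitrary size, and $\mathcal H_{\rm out}$ is one qubit. It is specified by input-independent unitaries $U_0,\dots,U_t$, and on input $x$ produces the state $U_tO_xU_{t-1}O_x\cdots O_xU_0|0\rangle$ ($t$ applications of $O_x$), where the oracle $O_x$ acts on $\mathcal H_{\rm in}$ by $|i\rangle\mapsto(-1)^{x_i}|i\rangle$ with the convention $x_0=0$ (and as the identity on the other registers). The output is obtained by measuring $\mathcal H_{\rm out}$ in the computational basis. The algorithm computes $h$ exactly if for every $x$ the output equals $h(x)$ with probability $1$. $Q_E(h)$ is the minimum $t$ such that some $t$-query quantum query algorithm computes $h$ exactly. A parity decision tree is a rooted binary tree in which every internal vertex has exactly two children and each internal vertex $v$ is labelled by a subset $S_v$ of input positions, and each leaf is labelled $0$ or $1$. On input $x$, evaluation starts at the root; at internal vertex $v$ the parity $\bigoplus_{i\in S_v}x_i$ is computed, and the left subtree is evaluated if it is $0$ and the right subtree if it is $1$; the output is the label of the leaf reached. Its depth is the maximum length of a root-to-leaf path. *)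

theory Defs
  imports "Jordan_Normal_Form.Schur_Decomposition"
begin

text \<open>An input x in {0,1}^m is a function nat => bool, true = 1, supported on positions 1..m;
  in particular x 0 = False, matching the convention x_0 = 0.\<close>
definition inputs :: "nat \<Rightarrow> (nat \<Rightarrow> bool) set" where
  "inputs m = {x. \<forall>i. i \<notin> {1..m} \<longrightarrow> \<not> x i}"

text \<open>Hilbert space H_in (basis |0>,...,|m>) tensor H_work (dimension W >= 1) tensor H_out (one qubit),
  realised as C^D with D = (m+1)*W*2; the basis state |i>|w>|b> has index (i*W + w)*2 + b.\<close>
definition qdim :: "nat \<Rightarrow> nat \<Rightarrow> nat" where
  "qdim m W = (m + 1) * W * 2"

definition in_reg :: "nat \<Rightarrow> nat \<Rightarrow> nat" where
  "in_reg W k = k div (2 * W)"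

definition out_reg :: "nat \<Rightarrow> bool" where
  "out_reg k = (k mod 2 = 1)"

definition unitary_mat :: "nat \<Rightarrow> complex mat \<Rightarrow> bool" where
  "unitary_mat D U \<longleftrightarrow> U \<in> carrier_mat D D \<and> U * mat_adjoint U = 1\<^sub>m D"

definition query_op :: "nat \<Rightarrow> nat \<Rightarrow> (nat \<Rightarrow> bool) \<Rightarrow> complex mat" where
  "query_op m W x = mat (qdim m W) (qdim m W)
     (\<lambda>(k, l). if k = l then (if x (in_reg W k) then -1 else 1) else 0)"

text \<open>run [U_0, ..., U_t] O v = U_t O U_(t-1) ... O U_0 v.\<close>
fun run :: "complex mat list \<Rightarrow> complex mat \<Rightarrow> complex vec \<Rightarrow> complex vec" where
  "run [] Q v = v"
| "run [U] Q v = U *\<^sub>v v"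
| "run (U # V # Us) Q v = run (V # Us) Q (Q *\<^sub>v (U *\<^sub>v v))"

definition final_state :: "nat \<Rightarrow> nat \<Rightarrow> complex mat list \<Rightarrow> (nat \<Rightarrow> bool) \<Rightarrow> complex vec" where
  "final_state m W Us x = run Us (query_op m W x) (unit_vec (qdim m W) 0)"

definition prob_out :: "nat \<Rightarrow> nat \<Rightarrow> complex mat list \<Rightarrow> (nat \<Rightarrow> bool) \<Rightarrow> bool \<Rightarrow> real" where
  "prob_out m W Us x b = (\<Sum>k \<in> {k. k < qdim m W \<and> out_reg k = b}. (cmod (final_state m W Us x $ k))\<^sup>2)"

definition computes_exactly :: "nat \<Rightarrow> ((nat \<Rightarrow> bool) \<Rightarrow> bool) \<Rightarrow> nat \<Rightarrow> nat \<Rightarrow> complex mat list \<Rightarrow> bool" where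
  "computes_exactly m h t W Us \<longleftrightarrow>
     W \<ge> 1 \<and> length Us = t + 1 \<and> (\<forall>U \<in> set Us. unitary_mat (qdim m W) U) \<and>
     (\<forall>x \<in> inputs m. prob_out m W Us x (h x) = 1)"

definition QE :: "nat \<Rightarrow> ((nat \<Rightarrow> bool) \<Rightarrow> bool) \<Rightarrow> nat" where
  "QE m h = (LEAST t. \<exists>W Us. computes_exactly m h t W Us)"

datatype pdt = Leaf bool | Node "nat set" pdt pdt

fun pdt_wf :: "nat \<Rightarrow> pdt \<Rightarrow> bool" where
  "pdt_wf m (Leaf b) = True"
| "pdt_wf m (Node S l r) = (S \<subseteq> {1..m} \<and> pdt_wf m l \<and> pdt_wf m r)"

fun pdt_eval :: "pdt \<Rightarrow> (nat \<Rightarrow> bool) \<Rightarrow> bool" where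
  "pdt_eval (Leaf b) x = b"
| "pdt_eval (Node S l r) x = (if odd (card {i \<in> S. x i}) then pdt_eval r x else pdt_eval l x)"

fun pdt_depth :: "pdt \<Rightarrow> nat" where
  "pdt_depth (Leaf b) = 0"
| "pdt_depth (Node S l r) = Suc (max (pdt_depth l) (pdt_depth r))"

definition pdt_computes :: "nat \<Rightarrow> ((nat \<Rightarrow> bool) \<Rightarrow> bool) \<Rightarrow> pdt \<Rightarrow> bool" where
  "pdt_computes m h T \<longleftrightarrow> pdt_wf m T \<and> (\<forall>x \<in> inputs m. pdt_eval T x = h x)"

definition f_and_or :: "(nat \<Rightarrow> bool) \<Rightarrow> bool" where
  "f_and_or x = (x 1 \<and> (x 2 \<or> x 3))"

end

theory Submission
  imports Defs
begin


definition ge :: "nat \<Rightarrow> nat \<Rightarrow> real \<Rightarrow> real \<Rightarrow> real \<Rightarrow> real \<Rightarrow> nat \<Rightarrow> nat \<Rightarrow> real" where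
  "ge p q a b c d i j = (if i = p then (if j = p then a else if j = q then b else 0)
     else if i = q then (if j = p then c else if j = q then d else 0) else (if i = j then 1 else 0))"

definition rgate :: "nat \<Rightarrow> nat \<Rightarrow> nat \<Rightarrow> real \<Rightarrow> real \<Rightarrow> real \<Rightarrow> real \<Rightarrow> complex mat" where
  "rgate n p q a b c d = mat n n (\<lambda>(i,j). complex_of_real (ge p q a b c d i j))"

definition rvec :: "nat \<Rightarrow> (nat \<Rightarrow> real) \<Rightarrow> complex vec" where
  "rvec n f = vec n (\<lambda>i. complex_of_real (f i))"

lemma gsum:
  assumes "p < n" "q < n" "p \<noteq> q" "i < n"
  shows "(\<Sum>j = 0..<n. ge p q a b c d i j * g j) =
    (if i = p then a * g p + b * g q else if i = q then c * g p + d * g q else g i)"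
proof -
  have e: "\<And>j. ge p q a b c d i j * g j =
     (if j = p then (if i = p then a * g p else if i = q then c * g p else 0) else 0)
   + (if j = q then (if i = p then b * g q else if i = q then d * g q else 0) else 0)
   + (if j = i then (if i = p \<or> i = q then 0 else g i) else 0)"
    using assms(3) unfolding ge_def by auto
  show ?thesis unfolding e sum.distrib using assms by (simp add: sum.delta)
qed

lemma rgate_mult:
  assumes "p < n" "q < n" "p \<noteq> q"
  shows "rgate n p q a b c d *\<^sub>v rvec n f = rvec n (\<lambda>i. if i = p then a * f p + b * f q else if i = q then c * f p + d * f q else f i)"
proof (rule eq_vecI)
  fix i assume i: "i < dim_vec (rvec n (\<lambda>i. if i = p then a * f p + b * f q else if i = q then c * f p + d * f q else f i))"
  then have i': "i < n" by (simp add: rvec_def)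
  have "(rgate n p q a b c d *\<^sub>v rvec n f) $ i = (\<Sum>j = 0..<n. complex_of_real (ge p q a b c d i j) * complex_of_real (f j))"
    using i' by (simp add: rgate_def rvec_def scalar_prod_def)
  also have "\<dots> = complex_of_real (\<Sum>j = 0..<n. ge p q a b c d i j * f j)" by simp
  also have "\<dots> = complex_of_real (if i = p then a * f p + b * f q else if i = q then c * f p + d * f q else f i)"
    using gsum[OF assms i'] by simp
  finally show "(rgate n p q a b c d *\<^sub>v rvec n f) $ i = rvec n (\<lambda>i. if i = p then a * f p + b * f q else if i = q then c * f p + d * f q else f i) $ i"
    using i' by (simp add: rvec_def)
qed (simp add: rgate_def rvec_def)

lemma adj_carrier: "M \<in> carrier_mat n n \<Longrightarrow> mat_adjoint M \<in> carrier_mat n n"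
  unfolding mat_adjoint_def by auto

lemma adj_index: "M \<in> carrier_mat n n \<Longrightarrow> i < n \<Longrightarrow> j < n \<Longrightarrow> mat_adjoint M $$ (i,j) = cnj (M $$ (j,i))"
  unfolding mat_adjoint_def by (subst mat_of_rows_index) auto

lemma rgate_carrier: "rgate n p q a b c d \<in> carrier_mat n n"
  by (simp add: rgate_def)

lemma rgate_unitary:
  assumes "p < n" "q < n" "p \<noteq> q" "a*a + b*b = 1" "c*c + d*d = 1" "a*c + b*d = 0"
  shows "unitary_mat n (rgate n p q a b c d)"
  unfolding unitary_mat_def
proof (intro conjI rgate_carrier eq_matI)
  let ?G = "rgate n p q a b c d"
  have C: "?G \<in> carrier_mat n n" by (rule rgate_carrier)
  fix i j assume i: "i < dim_row (1\<^sub>m n :: complex mat)" and j: "j < dim_col (1\<^sub>m n :: complex mat)"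
  then have i': "i < n" and j': "j < n" by auto
  have adjG: "mat_adjoint ?G $$ (l,j) = complex_of_real (ge p q a b c d j l)" if l: "l < n" for l
  proof -
    have "mat_adjoint ?G $$ (l,j) = cnj (?G $$ (j,l))" using adj_index[OF C l j'] .
    then show ?thesis using l j' by (simp add: rgate_def)
  qed
  have Gi: "?G $$ (i,l) = complex_of_real (ge p q a b c d i l)" if l: "l < n" for l
    using l i' by (simp add: rgate_def)
  have "(?G * mat_adjoint ?G) $$ (i,j) = (\<Sum>l = 0..<n. ?G $$ (i,l) * mat_adjoint ?G $$ (l,j))"
    using i' j' C adj_carrier[OF C] by (simp add: scalar_prod_def)
  also have "\<dots> = (\<Sum>l = 0..<n. complex_of_real (ge p q a b c d i l * ge p q a b c d j l))"
    by (intro sum.cong refl) (simp add: adjG Gi)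
  also have "\<dots> = complex_of_real (\<Sum>l = 0..<n. ge p q a b c d i l * ge p q a b c d j l)" by simp
  also have "(\<Sum>l = 0..<n. ge p q a b c d i l * ge p q a b c d j l) = (if i = j then 1 else 0)"
    using gsum[OF assms(1-3) i', of a b c d "ge p q a b c d j"] assms
    by (cases "i = p"; cases "i = q"; cases "j = p"; cases "j = q") (simp_all add: ge_def algebra_simps)
  finally show "(?G * mat_adjoint ?G) $$ (i,j) = 1\<^sub>m n $$ (i,j)" using i' j' by simp
qed (use rgate_carrier[of n p q a b c d] adj_carrier[OF rgate_carrier[of n p q a b c d]] in auto)

lemma adj_mult:
  fixes A B :: "complex mat"
  assumes A: "A \<in> carrier_mat n n" and B: "B \<in> carrier_mat n n"
  shows "mat_adjoint (A * B) = mat_adjoint B * mat_adjoint A"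
proof (rule eq_matI)
  have AB: "A * B \<in> carrier_mat n n" using A B by simp
  fix i j assume "i < dim_row (mat_adjoint B * mat_adjoint A)" "j < dim_col (mat_adjoint B * mat_adjoint A)"
  then have i: "i < n" and j: "j < n" using adj_carrier[OF A] adj_carrier[OF B] by auto
  have "mat_adjoint (A * B) $$ (i,j) = cnj (\<Sum>l = 0..<n. A $$ (j,l) * B $$ (l,i))"
    using adj_index[OF AB i j] A B i j by (simp add: scalar_prod_def)
  also have "\<dots> = (\<Sum>l = 0..<n. mat_adjoint B $$ (i,l) * mat_adjoint A $$ (l,j))"
    by (simp add: cnj_sum adj_index[OF A] adj_index[OF B] i j mult.commute)
  also have "\<dots> = (mat_adjoint B * mat_adjoint A) $$ (i,j)"
    using adj_carrier[OF A] adj_carrier[OF B] i j by (simp add: scalar_prod_def)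
  finally show "mat_adjoint (A * B) $$ (i,j) = (mat_adjoint B * mat_adjoint A) $$ (i,j)" .
qed (use adj_carrier[OF A] adj_carrier[OF B] A B adj_carrier[of "A*B" n] in auto)

lemma unitary_mult:
  assumes "unitary_mat n A" "unitary_mat n B"
  shows "unitary_mat n (A * B)"
proof -
  have A: "A \<in> carrier_mat n n" and B: "B \<in> carrier_mat n n"
    and a: "A * mat_adjoint A = 1\<^sub>m n" and b: "B * mat_adjoint B = 1\<^sub>m n"
    using assms unfolding unitary_mat_def by auto
  have "A * B * mat_adjoint (A * B) = A * (B * mat_adjoint B) * mat_adjoint A"
    using A B adj_carrier[OF A] adj_carrier[OF B] by (simp add: adj_mult assoc_mult_mat[of _ n n _ n _ n])
  also have "\<dots> = 1\<^sub>m n" using a b A by simp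
  finally show ?thesis using A B unfolding unitary_mat_def by simp
qed




definition P3 :: "bool \<Rightarrow> bool \<Rightarrow> bool \<Rightarrow> (nat \<Rightarrow> bool) \<Rightarrow> bool" where
  "P3 a b c x = ((a \<and> x 1) \<noteq> ((b \<and> x 2) \<noteq> (c \<and> x 3)))"

lemma par3:
  assumes "S \<subseteq> {1..3}"
  shows "odd (card {i\<in>S. x i}) = P3 (1\<in>S) (2\<in>S) (3\<in>S) x"
proof -
  have e: "{i\<in>S. x i} = (if 1\<in>S \<and> x 1 then {1} else {}) \<union> (if 2\<in>S \<and> x 2 then {2} else {}) \<union> (if 3\<in>S \<and> x 3 then {3} else {})"
  proof -
    have "\<And>i. i \<in> S \<Longrightarrow> i = 1 \<or> i = 2 \<or> i = 3" using assms by auto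
    then show ?thesis by (auto split: if_splits)
  qed
  show ?thesis unfolding e P3_def
    by (cases "1\<in>S"; cases "x 1"; cases "2\<in>S"; cases "x 2"; cases "3\<in>S"; cases "x 3") auto
qed

lemma depth1:
  assumes "pdt_wf 3 T" "pdt_depth T \<le> 1"
  shows "\<exists>c a1 a2 a3. \<forall>x. pdt_eval T x = (c \<noteq> P3 a1 a2 a3 x)"
proof (cases T)
  case (Leaf b)
  then have "\<forall>x. pdt_eval T x = (b \<noteq> P3 False False False x)" by (simp add: P3_def)
  then show ?thesis by blast
next
  case (Node S l r)
  have "pdt_depth l = 0" "pdt_depth r = 0" using assms(2) Node by auto
  then obtain bl br where l: "l = Leaf bl" and r: "r = Leaf br"
    by (cases l; cases r) auto
  have S: "S \<subseteq> {1..3}" using assms Node by auto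
  show ?thesis
  proof (cases "bl = br")
    case True
    then have "\<forall>x. pdt_eval T x = (bl \<noteq> P3 False False False x)" using Node l r by (simp add: P3_def)
    then show ?thesis by blast
  next
    case False
    then have "\<forall>x. pdt_eval T x = (bl \<noteq> P3 (1\<in>S) (2\<in>S) (3\<in>S) x)" using Node l r par3[OF S] by auto
    then show ?thesis by blast
  qed
qed

lemma depth2:
  assumes "pdt_wf 3 T" "pdt_depth T \<le> 2"
  shows "\<exists>s1 s2 s3 c a1 a2 a3 d b1 b2 b3. \<forall>x. pdt_eval T x =
     (if P3 s1 s2 s3 x then (d \<noteq> P3 b1 b2 b3 x) else (c \<noteq> P3 a1 a2 a3 x))"
proof (cases T)
  case (Leaf b)
  then have "\<forall>x. pdt_eval T x =
     (if P3 False False False x then (b \<noteq> P3 False False False x) else (b \<noteq> P3 False False False x))"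
    by (simp add: P3_def)
  then show ?thesis by blast
next
  case (Node S l r)
  have S: "S \<subseteq> {1..3}" using assms Node by auto
  have l1: "pdt_wf 3 l" "pdt_depth l \<le> 1" "pdt_wf 3 r" "pdt_depth r \<le> 1" using assms Node by auto
  obtain c a1 a2 a3 where L: "\<forall>x. pdt_eval l x = (c \<noteq> P3 a1 a2 a3 x)"
    using depth1[OF l1(1,2)] by blast
  obtain d b1 b2 b3 where R: "\<forall>x. pdt_eval r x = (d \<noteq> P3 b1 b2 b3 x)"
    using depth1[OF l1(3,4)] by blast
  have "\<forall>x. pdt_eval T x =
     (if P3 (1\<in>S) (2\<in>S) (3\<in>S) x then (d \<noteq> P3 b1 b2 b3 x) else (c \<noteq> P3 a1 a2 a3 x))"
    using L R par3[OF S] unfolding Node by simp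
  then show ?thesis by blast
qed

definition inp :: "bool \<Rightarrow> bool \<Rightarrow> bool \<Rightarrow> nat \<Rightarrow> bool" where
  "inp a b c = (\<lambda>i. (i = 1 \<and> a) \<or> (i = 2 \<and> b) \<or> (i = 3 \<and> c))"

lemma inp_in: "inp a b c \<in> inputs 3"
  unfolding inp_def inputs_def by auto

lemma P3_inp: "P3 a b c (inp u v w) = ((a \<and> u) \<noteq> ((b \<and> v) \<noteq> (c \<and> w)))"
  unfolding P3_def inp_def by simp

lemma f_inp: "f_and_or (inp u v w) = (u \<and> (v \<or> w))"
  unfolding f_and_or_def inp_def by simp

lemma pdt_part: "pdt_computes 3 f_and_or T \<Longrightarrow> pdt_depth T \<ge> 3"
proof (rule ccontr)
  assume c: "pdt_computes 3 f_and_or T" and "\<not> pdt_depth T \<ge> 3"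
  then have dd: "pdt_depth T \<le> 2" by simp
  have w: "pdt_wf 3 T" using c by (simp add: pdt_computes_def)
  from depth2[OF w dd] obtain s1 s2 s3 c0 a1 a2 a3 d b1 b2 b3 where E: "\<forall>x. pdt_eval T x =
     (if P3 s1 s2 s3 x then (d \<noteq> P3 b1 b2 b3 x) else (c0 \<noteq> P3 a1 a2 a3 x))"
    by blast
  have F: "\<And>u v w. (if P3 s1 s2 s3 (inp u v w) then (d \<noteq> P3 b1 b2 b3 (inp u v w)) else (c0 \<noteq> P3 a1 a2 a3 (inp u v w))) = (u \<and> (v \<or> w))"
    using c inp_in E f_inp unfolding pdt_computes_def by metis
  note G = F[unfolded P3_inp]
  show False
    using G[of False False False] G[of False False True] G[of False True False] G[of False True True]
      G[of True False False] G[of True False True] G[of True True False] G[of True True True]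
    by (cases s1; cases s2; cases s3; cases c0; cases d) auto
qed




lemma rvec_carrier[simp]: "rvec n f \<in> carrier_vec n" by (simp add: rvec_def)

lemma sum_delta_mult: "(i::nat) < n \<Longrightarrow> (\<Sum>j = 0..<n. (if i = j then c else 0) * g j) = (c * g i :: complex)"
proof -
  assume i: "i < n"
  have "(\<Sum>j = 0..<n. (if i = j then c else 0) * g j) = (\<Sum>j = 0..<n. (if i = j then c * g j else 0))"
    by (intro sum.cong) auto
  also have "\<dots> = c * g i" using i by simp
  finally show ?thesis .
qed

lemma query_rvec: "query_op m W x *\<^sub>v rvec (qdim m W) f = rvec (qdim m W) (\<lambda>k. (if x (in_reg W k) then -1 else 1) * f k)"
proof (rule eq_vecI)
  fix i assume "i < dim_vec (rvec (qdim m W) (\<lambda>k. (if x (in_reg W k) then -1 else 1) * f k))"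
  then have i: "i < qdim m W" by (simp add: rvec_def)
  have "(query_op m W x *\<^sub>v rvec (qdim m W) f) $ i = (if x (in_reg W i) then -1 else 1) * complex_of_real (f i)"
    using i by (simp add: query_op_def rvec_def scalar_prod_def sum_delta_mult)
  then show "(query_op m W x *\<^sub>v rvec (qdim m W) f) $ i = rvec (qdim m W) (\<lambda>k. (if x (in_reg W k) then -1 else 1) * f k) $ i"
    using i by (simp add: rvec_def)
qed (simp add: rvec_def query_op_def)

lemma unit_rvec: "unit_vec n 0 = rvec n (\<lambda>i. if i = 0 then 1 else 0)"
  by (auto simp: rvec_def unit_vec_def)

lemma mv_assoc: "A \<in> carrier_mat n n \<Longrightarrow> B \<in> carrier_mat n n \<Longrightarrow> v \<in> carrier_vec n \<Longrightarrow> (A * B) *\<^sub>v v = A *\<^sub>v (B *\<^sub>v v)"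
  by (rule assoc_mult_mat_vec) auto

definition hh :: real where "hh = sqrt 2 / 2"

abbreviation HG where "HG p q \<equiv> rgate 8 p q hh hh hh (-hh)"

definition U0 :: "complex mat" where "U0 = HG 4 6 * rgate 8 0 4 hh (-hh) hh hh"
definition UV :: "complex mat" where
  "UV = HG 4 6 * (rgate 8 1 3 (1/2) (-(sqrt 3/2)) (sqrt 3/2) (1/2) * (rgate 8 1 6 0 1 1 0 *
    (rgate 8 0 2 (-hh) hh (-hh) (-hh) * (rgate 8 0 4 hh (-hh) hh hh * HG 4 6))))"
definition U2 :: "complex mat" where
  "U2 = rgate 8 1 2 0 1 1 0 * (HG 1 3 * (HG 0 2 * (rgate 8 1 6 (sqrt 3/3) (sqrt 6/3) (-(sqrt 6/3)) (sqrt 3/3) * HG 4 6)))"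

lemma rg_assoc: "B \<in> carrier_mat n n \<Longrightarrow> (rgate n p q a b c d * B) *\<^sub>v rvec n f = rgate n p q a b c d *\<^sub>v (B *\<^sub>v rvec n f)"
  by (metis assoc_mult_mat_vec rgate_carrier rvec_carrier)

lemma rg_carrier2: "B \<in> carrier_mat n n \<Longrightarrow> rgate n p q a b c d * B \<in> carrier_mat n n"
  using rgate_carrier by (metis mult_carrier_mat)

lemma query8: "query_op 3 1 x *\<^sub>v rvec 8 f = rvec 8 (\<lambda>k. (if x (k div 2) then -1 else 1) * f k)"
  using query_rvec[of 3 1 x f] by (simp add: qdim_def in_reg_def)

lemma qd: "qdim 3 1 = 8" by (simp add: qdim_def)

lemma fs: "final_state 3 1 [U0, UV, U2] x = U2 *\<^sub>v (query_op 3 1 x *\<^sub>v (UV *\<^sub>v (query_op 3 1 x *\<^sub>v (U0 *\<^sub>v unit_vec 8 0))))"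
  by (simp add: final_state_def qdim_def)

definition glist :: "nat \<Rightarrow> nat \<Rightarrow> real \<Rightarrow> real \<Rightarrow> real \<Rightarrow> real \<Rightarrow> real list \<Rightarrow> real list" where
  "glist p q a b c d xs = map (\<lambda>i. if i = p then a * xs!p + b * xs!q else if i = q then c * xs!p + d * xs!q else xs!i) [0..<length xs]"

definition qlist :: "(nat \<Rightarrow> bool) \<Rightarrow> real list \<Rightarrow> real list" where
  "qlist x xs = map (\<lambda>k. (if x (k div 2) then -1 else 1) * xs!k) [0..<length xs]"

definition lvec :: "real list \<Rightarrow> complex vec" where
  "lvec xs = rvec (length xs) (\<lambda>i. xs ! i)"

lemma rvec_eq: "(\<And>i. i < n \<Longrightarrow> f i = g i) \<Longrightarrow> rvec n f = rvec n g"
  unfolding rvec_def by (intro eq_vecI) auto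

lemma lvec_carrier: "length xs = n \<Longrightarrow> lvec xs \<in> carrier_vec n"
  by (simp add: lvec_def)

lemma glist_mult:
  assumes "length xs = n" "p < n" "q < n" "p \<noteq> q"
  shows "rgate n p q a b c d *\<^sub>v lvec xs = lvec (glist p q a b c d xs)"
  using assms unfolding lvec_def glist_def
  by (simp add: rgate_mult) (rule rvec_eq, simp)

lemma qlist_mult:
  assumes "length xs = 8"
  shows "query_op 3 (Suc 0) x *\<^sub>v lvec xs = lvec (qlist x xs)"
  using assms query8[of x "\<lambda>i. xs!i"] unfolding lvec_def qlist_def
  by simp (rule rvec_eq, simp)

lemma rg_assoc': "B \<in> carrier_mat n n \<Longrightarrow> length xs = n \<Longrightarrow> (rgate n p q a b c d * B) *\<^sub>v lvec xs = rgate n p q a b c d *\<^sub>v (B *\<^sub>v lvec xs)"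
  by (metis assoc_mult_mat_vec rgate_carrier lvec_carrier)

lemma len_glist[simp]: "length (glist p q a b c d xs) = length xs" by (simp add: glist_def)
lemma len_qlist[simp]: "length (qlist x xs) = length xs" by (simp add: qlist_def)

lemma unit8: "unit_vec 8 0 = lvec [1,0,0,0,0,0,0,0]"
  unfolding lvec_def rvec_def unit_vec_def by (rule eq_vecI) (auto simp: nth_Cons')

lemma hh2: "hh * hh = 1/2" unfolding hh_def by (simp add: field_simps)
lemma hh3: "hh * (hh * x) = x/2" using hh2 by (metis mult.assoc mult.left_neutral times_divide_eq_left mult.commute)

lemma LU0: "length xs = 8 \<Longrightarrow> U0 *\<^sub>v lvec xs = lvec (glist 4 6 hh hh hh (-hh) (glist 0 4 hh (-hh) hh hh xs))"
  unfolding U0_def by (simp add: rg_assoc' rgate_carrier rg_carrier2 glist_mult)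

lemma LUV: "length xs = 8 \<Longrightarrow> UV *\<^sub>v lvec xs = lvec (glist 4 6 hh hh hh (-hh) (glist 1 3 (1/2) (-(sqrt 3/2)) (sqrt 3/2) (1/2) (glist 1 6 0 1 1 0 (glist 0 2 (-hh) hh (-hh) (-hh) (glist 0 4 hh (-hh) hh hh (glist 4 6 hh hh hh (-hh) xs))))))"
  unfolding UV_def by (simp add: rg_assoc' rgate_carrier rg_carrier2 glist_mult)

lemma LU2: "length xs = 8 \<Longrightarrow> U2 *\<^sub>v lvec xs = lvec (glist 1 2 0 1 1 0 (glist 1 3 hh hh hh (-hh) (glist 0 2 hh hh hh (-hh) (glist 1 6 (sqrt 3/3) (sqrt 6/3) (-(sqrt 6/3)) (sqrt 3/3) (glist 4 6 hh hh hh (-hh) xs)))))"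
  unfolding U2_def by (simp add: rg_assoc' rgate_carrier rg_carrier2 glist_mult)

definition FS :: "(nat \<Rightarrow> bool) \<Rightarrow> real list" where "FS x = (glist 1 2 0 1 1 0 (glist 1 3 hh hh hh (-hh) (glist 0 2 hh hh hh (-hh) (glist 1 6 (sqrt 3/3) (sqrt 6/3) (-(sqrt 6/3)) (sqrt 3/3) (glist 4 6 hh hh hh (-hh) (qlist x (glist 4 6 hh hh hh (-hh) (glist 1 3 (1/2) (-(sqrt 3/2)) (sqrt 3/2) (1/2) (glist 1 6 0 1 1 0 (glist 0 2 (-hh) hh (-hh) (-hh) (glist 0 4 hh (-hh) hh hh (glist 4 6 hh hh hh (-hh) (qlist x (glist 4 6 hh hh hh (-hh) (glist 0 4 hh (-hh) hh hh [1,0,0,0,0,0,0,0])))))))))))))))"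

lemma fs8: "final_state 3 1 [U0, UV, U2] x = lvec (FS x)"
  unfolding fs unit8 FS_def by (simp add: LU0 LUV LU2 qlist_mult)

lemma less8: "(i::nat) < 8 \<Longrightarrow> i = 0 \<or> i = 1 \<or> i = 2 \<or> i = 3 \<or> i = 4 \<or> i = 5 \<or> i = 6 \<or> i = 7"
  by auto

lemma outset: "{k. k < qdim 3 1 \<and> out_reg k = b} = (if b then {1,3,5,7} else {0,2,4,6})"
  unfolding qdim_def out_reg_def by (auto dest!: less8)

lemma prob_FS: "prob_out 3 1 [U0, UV, U2] x b = (\<Sum>k \<in> (if b then {1,3,5,7} else {0,2,4,6}). (FS x ! k)^2)"
proof -
  have L: "length (FS x) = 8" by (simp add: FS_def)
  have "\<And>k. k < 8 \<Longrightarrow> (cmod (lvec (FS x) $ k))^2 = (FS x ! k)^2"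
    using L by (simp add: lvec_def rvec_def)
  moreover have "\<And>k. k \<in> (if b then {1,3,5,7} else {0,2,4,6}) \<Longrightarrow> k < (8::nat)" by (auto split: if_splits)
  ultimately show ?thesis unfolding prob_out_def outset fs8 by (intro sum.cong) auto
qed

lemma s6: "sqrt 6 = sqrt 2 * sqrt 3" by (simp add: real_sqrt_mult[symmetric])

lemma hh6: "hh * sqrt 6 = sqrt 3" unfolding hh_def s6 by simp
lemma hh6': "hh * (sqrt 6 * x) = sqrt 3 * x" using hh6 by (metis mult.assoc)
lemma r3: "sqrt 3 * sqrt 3 = 3" by simp
lemma r3': "sqrt 3 * (sqrt 3 * x) = 3 * x" by (metis r3 mult.assoc)

lemma test1: "prob_out 3 1 [U0, UV, U2] (inp True False True) True = 1"
  unfolding prob_FS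
  apply (simp add: FS_def glist_def qlist_def inp_def algebra_simps hh2 hh3 hh6 hh6')
  apply (simp add: power2_eq_square algebra_simps hh2 hh3 hh6 hh6' r3 r3')
  done

lemma prob_inp: "prob_out 3 1 [U0, UV, U2] (inp a b c) (a \<and> (b \<or> c)) = 1"
  unfolding prob_FS
  by (cases a; cases b; cases c;
      simp add: FS_def glist_def qlist_def inp_def algebra_simps hh2 hh3 hh6 hh6';
      simp add: power2_eq_square algebra_simps hh2 hh3 hh6 hh6' r3 r3')

lemma inputs3: "x \<in> inputs 3 \<Longrightarrow> x = inp (x 1) (x 2) (x 3)"
proof
  fix i assume "x \<in> inputs 3"
  then have "\<And>i. i \<notin> {1..3} \<Longrightarrow> \<not> x i" unfolding inputs_def by auto
  then show "x i = inp (x 1) (x 2) (x 3) i" unfolding inp_def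
    by (cases "i = 1"; cases "i = 2"; cases "i = 3") auto
qed

lemma hhsq: "hh^2 = 1/2" using hh2 by (simp add: power2_eq_square)

lemma s6sq: "sqrt 2 * sqrt 3 * (sqrt 2 * sqrt 3) = 6"
  by (metis real_sqrt_mult real_sqrt_mult_self abs_of_nonneg zero_le_numeral mult_2 numeral_Bit0 numeral_times_numeral num_double)

lemma hhu: "hh * hh + hh * hh = 1" using hh2 by simp

lemma U0_unitary: "unitary_mat 8 U0"
  unfolding U0_def by (intro unitary_mult rgate_unitary) (simp_all add: hhsq hh2)

lemma UV_unitary: "unitary_mat 8 UV"
  unfolding UV_def by (intro unitary_mult rgate_unitary) (simp_all add: hhsq hh2 power_divide)

lemma U2_unitary: "unitary_mat 8 U2"
  unfolding U2_def by (intro unitary_mult rgate_unitary) (simp_all add: hhsq hh2 power_divide s6 power_mult_distrib s6sq)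

lemma upper: "computes_exactly 3 f_and_or 2 1 [U0, UV, U2]"
  unfolding computes_exactly_def
proof (intro conjI ballI)
  fix U assume "U \<in> set [U0, UV, U2]"
  then show "unitary_mat (qdim 3 1) U" using U0_unitary UV_unitary U2_unitary by (auto simp: qdim_def)
next
  fix x assume x: "x \<in> inputs 3"
  show "prob_out 3 1 [U0, UV, U2] x (f_and_or x) = 1"
  proof -
    have e: "x = inp (x 1) (x 2) (x 3)" by (rule inputs3[OF x])
    have "prob_out 3 1 [U0,UV,U2] (inp (x 1) (x 2) (x 3)) (f_and_or (inp (x 1) (x 2) (x 3))) = 1"
      using prob_inp f_inp by simp
    then show ?thesis by (simp only: e[symmetric])
  qed
qed auto




lemma mv_index: "U \<in> carrier_mat n n \<Longrightarrow> v \<in> carrier_vec n \<Longrightarrow> k < n \<Longrightarrow> (U *\<^sub>v v) $ k = (\<Sum>j<n. U $$ (k,j) * v $ j)"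
  by (simp add: scalar_prod_def atLeast0LessThan)

lemma unitary_norm:
  assumes uni: "unitary_mat n U" and v: "v \<in> carrier_vec n"
  shows "(\<Sum>k<n. (cmod ((U *\<^sub>v v) $ k))^2) = (\<Sum>k<n. (cmod (v $ k))^2)"
proof -
  have U: "U \<in> carrier_mat n n" and UU: "U * mat_adjoint U = 1\<^sub>m n" using uni unitary_mat_def by auto
  have AU: "mat_adjoint U * U = 1\<^sub>m n"
    by (rule mat_mult_left_right_inverse[OF U adj_carrier[OF U] UU])
  have delta: "(\<Sum>k<n. cnj (U $$ (k,l)) * U $$ (k,j)) = (if l = j then 1 else 0)" if l: "l < n" and j: "j < n" for l j
  proof -
    have "(mat_adjoint U * U) $$ (l,j) = (\<Sum>k<n. mat_adjoint U $$ (l,k) * U $$ (k,j))"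
      using l j U adj_carrier[OF U] by (simp add: scalar_prod_def atLeast0LessThan)
    also have "\<dots> = (\<Sum>k<n. cnj (U $$ (k,l)) * U $$ (k,j))"
      using l by (intro sum.cong refl) (simp add: adj_index[OF U])
    finally show ?thesis using AU l j by simp
  qed
  have "complex_of_real (\<Sum>k<n. (cmod ((U *\<^sub>v v) $ k))^2) = (\<Sum>k<n. (U *\<^sub>v v) $ k * cnj ((U *\<^sub>v v) $ k))"
    by (simp only: of_real_sum complex_norm_square)
  also have "\<dots> = (\<Sum>k<n. \<Sum>j<n. \<Sum>l<n. (U $$ (k,j) * v $ j) * cnj (U $$ (k,l) * v $ l))"
    by (intro sum.cong refl) (simp add: mv_index[OF U v] cnj_sum sum_product)
  also have "\<dots> = (\<Sum>j<n. \<Sum>k<n. \<Sum>l<n. (U $$ (k,j) * v $ j) * cnj (U $$ (k,l) * v $ l))"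
    by (rule sum.swap)
  also have "\<dots> = (\<Sum>j<n. \<Sum>l<n. \<Sum>k<n. (U $$ (k,j) * v $ j) * cnj (U $$ (k,l) * v $ l))"
    by (rule sum.cong[OF refl], rule sum.swap)
  also have "\<dots> = (\<Sum>j<n. \<Sum>l<n. v $ j * cnj (v $ l) * (\<Sum>k<n. cnj (U $$ (k,l)) * U $$ (k,j)))"
    by (intro sum.cong refl) (simp add: sum_distrib_left algebra_simps)
  also have "\<dots> = (\<Sum>j<n. \<Sum>l<n. v $ j * cnj (v $ l) * (if l = j then 1 else 0))"
    by (intro sum.cong refl) (simp add: delta)
  also have "\<dots> = (\<Sum>j<n. v $ j * cnj (v $ j))"
    by (intro sum.cong refl) (simp add: if_distrib[of "\<lambda>z. _ * z"] sum.delta cong: if_cong)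
  also have "\<dots> = complex_of_real (\<Sum>k<n. (cmod (v $ k))^2)"
    by (simp only: of_real_sum complex_norm_square)
  finally show ?thesis by (simp only: of_real_eq_iff)
qed

definition sgc :: "bool \<Rightarrow> complex" where "sgc b = (if b then -1 else 1)"
definition inpu :: "bool \<times> bool \<times> bool \<Rightarrow> nat \<Rightarrow> bool" where "inpu u = inp (fst u) (fst (snd u)) (snd (snd u))"
definition chic :: "bool \<times> bool \<times> bool \<Rightarrow> complex" where "chic u = sgc (fst u) * sgc (fst (snd u)) * sgc (snd (snd u))"

lemma sum_bool3: "(\<Sum>u\<in>UNIV. F u) = (\<Sum>a\<in>UNIV. \<Sum>b\<in>UNIV. \<Sum>c\<in>UNIV. F (a,b,c))"
proof -
  have "(\<Sum>u\<in>UNIV. F u) = (\<Sum>u\<in>UNIV \<times> UNIV. F u)" by simp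
  also have "\<dots> = (\<Sum>a\<in>UNIV. \<Sum>bc\<in>UNIV. F (a,bc))" by (subst sum.cartesian_product) simp
  also have "\<dots> = (\<Sum>a\<in>UNIV. \<Sum>b\<in>UNIV. \<Sum>c\<in>UNIV. F (a,b,c))"
  proof (rule sum.cong[OF refl])
    fix a
    have "(\<Sum>bc\<in>UNIV. F (a,bc)) = (\<Sum>bc\<in>UNIV \<times> UNIV. F (a,bc))" by simp
    also have "\<dots> = (\<Sum>b\<in>UNIV. \<Sum>c\<in>UNIV. F (a,b,c))" by (subst sum.cartesian_product) simp
    finally show "(\<Sum>bc\<in>UNIV. F (a,bc)) = (\<Sum>b\<in>UNIV. \<Sum>c\<in>UNIV. F (a,b,c))" .
  qed
  finally show ?thesis .
qed

lemma inp_at: "inp a b c p = (if p = 1 then a else if p = 2 then b else if p = 3 then c else False)"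
  unfolding inp_def by auto

lemma char0: "(\<Sum>u\<in>UNIV. chic u * sgc (inpu u p) * sgc (inpu u q)) = 0"
  unfolding sum_bool3 inpu_def chic_def inp_at
  by (cases "p = 1"; cases "p = 2"; cases "p = 3"; cases "q = 1"; cases "q = 2"; cases "q = 3")
     (simp_all add: UNIV_bool sgc_def)

lemma cnj_sgc[simp]: "cnj (sgc b) = sgc b" by (simp add: sgc_def)

lemma fourier:
  fixes L :: "nat set" and g :: "nat \<Rightarrow> nat" and w :: "nat \<Rightarrow> complex"
  assumes "finite L"
  shows "(\<Sum>u\<in>UNIV. Re (chic u) * (cmod (\<Sum>l\<in>L. sgc (inpu u (g l)) * w l))^2) = 0"
proof -
  have cr: "complex_of_real (Re (chic u)) = chic u" for u by (simp add: chic_def sgc_def)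
  have "complex_of_real (\<Sum>u\<in>UNIV. Re (chic u) * (cmod (\<Sum>l\<in>L. sgc (inpu u (g l)) * w l))^2)
     = (\<Sum>u\<in>UNIV. chic u * ((\<Sum>l\<in>L. sgc (inpu u (g l)) * w l) * cnj (\<Sum>l\<in>L. sgc (inpu u (g l)) * w l)))"
    by (simp only: of_real_sum of_real_mult cr complex_norm_square)
  also have "\<dots> = (\<Sum>u\<in>UNIV. \<Sum>l\<in>L. \<Sum>m\<in>L. chic u * sgc (inpu u (g l)) * sgc (inpu u (g m)) * (w m * cnj (w l)))"
    by (intro sum.cong refl) (simp add: cnj_sum sum_product sum_distrib_left algebra_simps)
  also have "\<dots> = (\<Sum>l\<in>L. \<Sum>u\<in>UNIV. \<Sum>m\<in>L. chic u * sgc (inpu u (g l)) * sgc (inpu u (g m)) * (w m * cnj (w l)))"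
    by (rule sum.swap)
  also have "\<dots> = (\<Sum>l\<in>L. \<Sum>m\<in>L. \<Sum>u\<in>UNIV. chic u * sgc (inpu u (g l)) * sgc (inpu u (g m)) * (w m * cnj (w l)))"
    by (rule sum.cong[OF refl], rule sum.swap)
  also have "\<dots> = (\<Sum>l\<in>L. \<Sum>m\<in>L. (\<Sum>u\<in>UNIV. chic u * sgc (inpu u (g l)) * sgc (inpu u (g m))) * (w m * cnj (w l)))"
    by (simp only: sum_distrib_right)
  also have "\<dots> = 0" by (simp add: char0)
  finally show ?thesis by (simp only: of_real_eq_0_iff)
qed


lemma query_carrier: "query_op m W x \<in> carrier_mat (qdim m W) (qdim m W)"
  by (simp add: query_op_def)

lemma query_mv: "v \<in> carrier_vec (qdim m W) \<Longrightarrow> k < qdim m W \<Longrightarrow> (query_op m W x *\<^sub>v v) $ k = sgc (x (in_reg W k)) * v $ k"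
  by (simp add: query_op_def scalar_prod_def sum_delta_mult sgc_def)

lemma query_norm: "v \<in> carrier_vec (qdim m W) \<Longrightarrow>
  (\<Sum>k<qdim m W. (cmod ((query_op m W x *\<^sub>v v) $ k))^2) = (\<Sum>k<qdim m W. (cmod (v $ k))^2)"
  by (intro sum.cong refl) (simp add: query_mv norm_mult sgc_def)

lemma unit_norm: "0 < n \<Longrightarrow> (\<Sum>k<n. (cmod (unit_vec n 0 $ k))^2) = 1"
proof -
  assume n: "0 < n"
  have "(\<Sum>k<n. (cmod (unit_vec n 0 $ k))^2) = (\<Sum>k<n. if k = 0 then 1 else 0)"
    by (intro sum.cong refl) (simp add: unit_vec_def)
  also have "\<dots> = 1" using n by simp
  finally show ?thesis .
qed

lemma struct01:
  assumes ce: "computes_exactly 3 h t W Us" and t: "t < 2"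
  shows "\<exists>g w. (\<forall>x. \<not> x 0 \<longrightarrow> (\<forall>k<qdim 3 W. final_state 3 W Us x $ k = (\<Sum>l<qdim 3 W. sgc (x (g l)) * w k l)))
     \<and> (\<forall>x. (\<Sum>k<qdim 3 W. (cmod (final_state 3 W Us x $ k))^2) = 1)"
proof -
  let ?D = "qdim 3 W"
  have W: "W \<ge> 1" and len: "length Us = t + 1" and uni: "\<And>U. U \<in> set Us \<Longrightarrow> unitary_mat ?D U"
    using ce unfolding computes_exactly_def by auto
  have D: "0 < ?D" using W by (simp add: qdim_def)
  have e0: "unit_vec ?D 0 \<in> carrier_vec ?D" by simp
  show ?thesis
  proof (cases "t = 0")
    case True
    then obtain U0 where Us: "Us = [U0]" using len by (cases Us) auto
    have u0: "unitary_mat ?D U0" using uni Us by auto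
    then have C0: "U0 \<in> carrier_mat ?D ?D" by (simp add: unitary_mat_def)
    let ?w = "\<lambda>k l. if l = 0 then (U0 *\<^sub>v unit_vec ?D 0) $ k else 0"
    have A: "\<forall>x. \<not> x 0 \<longrightarrow> (\<forall>k<?D. final_state 3 W Us x $ k = (\<Sum>l<?D. sgc (x ((\<lambda>l. 0) l)) * ?w k l))"
      using D by (simp add: final_state_def Us sgc_def)
    have N: "\<forall>x. (\<Sum>k<?D. (cmod (final_state 3 W Us x $ k))^2) = 1"
      using unitary_norm[OF u0 e0] unit_norm[OF D] by (simp add: final_state_def Us)
    show ?thesis by (rule exI[of _ "\<lambda>l. 0"], rule exI[of _ ?w], rule conjI[OF A N])
  next
    case False
    then have t1: "t = 1" using t by simp
    then obtain U0 U1 where Us: "Us = [U0, U1]" using len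
      by (cases Us; cases "tl Us") auto
    have u0: "unitary_mat ?D U0" and u1: "unitary_mat ?D U1" using uni Us by auto
    then have C0: "U0 \<in> carrier_mat ?D ?D" and C1: "U1 \<in> carrier_mat ?D ?D" by (simp_all add: unitary_mat_def)
    let ?phi = "U0 *\<^sub>v unit_vec ?D 0"
    have phic: "?phi \<in> carrier_vec ?D" using C0 by simp
    let ?w = "\<lambda>k l. U1 $$ (k,l) * ?phi $ l"
    have fs: "final_state 3 W Us x = U1 *\<^sub>v (query_op 3 W x *\<^sub>v ?phi)" for x
      by (simp add: final_state_def Us)
    have A: "\<forall>x. \<not> x 0 \<longrightarrow> (\<forall>k<?D. final_state 3 W Us x $ k = (\<Sum>l<?D. sgc (x (in_reg W l)) * ?w k l))"
    proof (intro allI impI)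
      fix x k assume k: "k < ?D"
      have qc: "query_op 3 W x *\<^sub>v ?phi \<in> carrier_vec ?D" by (rule mult_mat_vec_carrier[OF query_carrier phic])
      have "final_state 3 W Us x $ k = (\<Sum>l<?D. U1 $$ (k,l) * (query_op 3 W x *\<^sub>v ?phi) $ l)"
        unfolding fs by (rule mv_index[OF C1 qc k])
      also have "\<dots> = (\<Sum>l<?D. sgc (x (in_reg W l)) * ?w k l)"
        by (intro sum.cong refl) (simp add: query_mv[OF phic])
      finally show "final_state 3 W Us x $ k = (\<Sum>l<?D. sgc (x (in_reg W l)) * ?w k l)" .
    qed
    have N: "\<forall>x. (\<Sum>k<?D. (cmod (final_state 3 W Us x $ k))^2) = 1"
    proof
      fix x
      have qc: "query_op 3 W x *\<^sub>v ?phi \<in> carrier_vec ?D" by (rule mult_mat_vec_carrier[OF query_carrier phic])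
      show "(\<Sum>k<?D. (cmod (final_state 3 W Us x $ k))^2) = 1"
        unfolding fs unitary_norm[OF u1 qc] query_norm[OF phic] unitary_norm[OF u0 e0] unit_norm[OF D] ..
    qed
    show ?thesis by (rule exI[of _ "in_reg W"], rule exI[of _ ?w], rule conjI[OF A N])
  qed
qed

lemma lower:
  assumes ce: "computes_exactly 3 f_and_or t W Us" and t: "t < 2"
  shows False
proof -
  let ?D = "qdim 3 W"
  obtain g w where A: "\<And>x k. \<not> x 0 \<Longrightarrow> k < ?D \<Longrightarrow> final_state 3 W Us x $ k = (\<Sum>l<?D. sgc (x (g l)) * w k l)"
    and N: "\<And>x. (\<Sum>k<?D. (cmod (final_state 3 W Us x $ k))^2) = 1"
    using struct01[OF ce t] by blast
  have ex: "\<And>x. x \<in> inputs 3 \<Longrightarrow> prob_out 3 W Us x (f_and_or x) = 1"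
    using ce unfolding computes_exactly_def by blast
  have split: "prob_out 3 W Us x True + prob_out 3 W Us x False = 1" for x
  proof -
    let ?F = "\<lambda>k. (cmod (final_state 3 W Us x $ k))^2"
    have u: "{..<?D} = {k. k < ?D \<and> out_reg k = True} \<union> {k. k < ?D \<and> out_reg k = False}" by auto
    have d: "{k. k < ?D \<and> out_reg k = True} \<inter> {k. k < ?D \<and> out_reg k = False} = {}" by auto
    have f1: "finite {k. k < ?D \<and> out_reg k = True}" and f2: "finite {k. k < ?D \<and> out_reg k = False}" by auto
    have "(\<Sum>k<?D. ?F k) = (\<Sum>k\<in>{k. k < ?D \<and> out_reg k = True} \<union> {k. k < ?D \<and> out_reg k = False}. ?F k)"
      by (subst u) (rule refl)
    also have "\<dots> = prob_out 3 W Us x True + prob_out 3 W Us x False"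
      unfolding prob_out_def by (rule sum.union_disjoint[OF f1 f2 d])
    finally have "(\<Sum>k<?D. (cmod (final_state 3 W Us x $ k))^2) = prob_out 3 W Us x True + prob_out 3 W Us x False" .
    then show ?thesis using N[of x] by simp
  qed
  have inpu_in: "inpu u \<in> inputs 3" for u unfolding inpu_def by (rule inp_in)
  have P: "prob_out 3 W Us (inpu u) True = (if f_and_or (inpu u) then 1 else 0)" for u
  proof (cases "f_and_or (inpu u)")
    case True then show ?thesis using ex[OF inpu_in[of u]] by simp
  next
    case False then show ?thesis using ex[OF inpu_in[of u]] split[of "inpu u"] by simp
  qed
  have S1: "(\<Sum>u\<in>UNIV. Re (chic u) * prob_out 3 W Us (inpu u) True) = 1"
    unfolding P sum_bool3 by (simp add: UNIV_bool inpu_def f_inp chic_def sgc_def)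
  let ?K = "{k. k < ?D \<and> out_reg k = True}"
  have pk: "prob_out 3 W Us (inpu u) True = (\<Sum>k\<in>?K. (cmod (\<Sum>l<?D. sgc (inpu u (g l)) * w k l))^2)" for u
  proof -
    have z: "\<not> inpu u 0" by (simp add: inpu_def inp_def)
    show ?thesis unfolding prob_out_def by (intro sum.cong refl) (simp add: A[of "inpu u", OF z])
  qed
  have "(\<Sum>u\<in>UNIV. Re (chic u) * prob_out 3 W Us (inpu u) True)
      = (\<Sum>u\<in>UNIV. \<Sum>k\<in>?K. Re (chic u) * (cmod (\<Sum>l<?D. sgc (inpu u (g l)) * w k l))^2)"
    unfolding pk by (simp add: sum_distrib_left)
  also have "\<dots> = (\<Sum>k\<in>?K. \<Sum>u\<in>UNIV. Re (chic u) * (cmod (\<Sum>l<?D. sgc (inpu u (g l)) * w k l))^2)"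
    by (rule sum.swap)
  also have "\<dots> = 0" by (simp add: fourier)
  finally show False using S1 by simp
qed


theorem mainTheorem6:
  shows "QE 3 f_and_or = 2 \<and> (\<forall>T. pdt_computes 3 f_and_or T \<longrightarrow> pdt_depth T \<ge> 3)"
proof
  show "QE 3 f_and_or = 2" unfolding QE_def
  proof (rule Least_equality)
    show "\<exists>W Us. computes_exactly 3 f_and_or 2 W Us" using upper by blast
  next
    fix y assume "\<exists>W Us. computes_exactly 3 f_and_or y W Us"
    then obtain W Us where c: "computes_exactly 3 f_and_or y W Us" by blast
    show "2 \<le> y"
    proof (rule ccontr)
      assume "\<not> 2 \<le> y"
      then have "y < 2" by simp
      then show False using lower[OF c] by simp
    qed
  qed
  show "\<forall>T. pdt_computes 3 f_and_or T \<longrightarrow> pdt_depth T \<ge> 3" using pdt_part by blast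
qed

end
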